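(* Let $t=(t_1,\dots,t_n)$ be nonnegative reals and $D_1,\dots,D_n\in\mathcal{H}_d$ positive semidefinite. Then for any $T_1\ge|t|_1$ and any $T_\infty>0$ with $T_\infty\ge|t|_\infty$, \[ \Big\|\sum_{i=1}^nt_iD_i\Big\|\le T_\infty\cdot\sup\Big\{\Big\|\sum_{i\in\mathcal{I}}D_i\Big\|:\ \mathcal{I}\subset[n],\ |\mathcal{I}|\le\lceil T_1/T_\infty\rceil\Big\}. \]
   Context: $\mathcal{H}_d$ is the space of $d\times d$ Hermitian matrices, $\|\cdot\|$ the operator norm, $|t|_1=\sum_i|t_i|$, $|t|_\infty=\max_i|t_i|$. *)

theory Defs
  imports "HOL-Analysis.Analysis"
begin

definition hermitian :: "complex^'d^'d \<Rightarrow> bool" where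
  "hermitian A \<longleftrightarrow> (\<forall>i j. A $ i $ j = cnj (A $ j $ i))"

definition psd :: "complex^'d^'d \<Rightarrow> bool" where
  "psd A \<longleftrightarrow> hermitian A \<and>
     (\<forall>x :: complex^'d. 0 \<le> Re (\<Sum>i\<in>UNIV. cnj (x $ i) * (A *v x) $ i))"

text \<open>Operator norm w.r.t. the Euclidean (l2) norm on complex^'d.\<close>
definition opnorm :: "complex^'d^'d \<Rightarrow> real" where
  "opnorm A = onorm (\<lambda>x :: complex^'d. A *v x)"

end

theory Submission
  imports Defs
begin

lemma conv_bound:
  fixes f :: "'a::real_vector \<Rightarrow> real" and v :: "nat \<Rightarrow> 'a" and K :: nat
  assumes sub: "\<And>x y. f (x+y) \<le> f x + f y"
    and hom: "\<And>c x. 0 \<le> c \<Longrightarrow> f (c *\<^sub>R x) = c * f x"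
    and M: "\<And>I. I \<subseteq> {..<n} \<Longrightarrow> card I \<le> K \<Longrightarrow> f (\<Sum>i\<in>I. v i) \<le> M"
  shows "(\<forall>i<n. 0 \<le> s i \<and> s i \<le> 1) \<Longrightarrow> (\<Sum>i<n. s i) \<le> real K
     \<Longrightarrow> f (\<Sum>i<n. s i *\<^sub>R v i) \<le> M"
proof -
  define fr where "fr s = {i. i<n \<and> 0 < s i \<and> s i < (1::real)}" for s
  have finfr: "finite (fr s)" for s unfolding fr_def by auto
  have conv: "f (\<Sum>i<n. s i *\<^sub>R v i) \<le> M"
    if a: "0 \<le> a" "a \<le> 1" and eq: "\<forall>i<n. s i = a * s1 i + (1-a) * s2 i"
      and h1: "f (\<Sum>i<n. s1 i *\<^sub>R v i) \<le> M" and h2: "f (\<Sum>i<n. s2 i *\<^sub>R v i) \<le> M"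
    for s s1 s2 :: "nat \<Rightarrow> real" and a
  proof -
    have "(\<Sum>i<n. s i *\<^sub>R v i) = (\<Sum>i<n. a *\<^sub>R (s1 i *\<^sub>R v i) + (1-a) *\<^sub>R (s2 i *\<^sub>R v i))"
      using eq by (intro sum.cong) (auto simp: scaleR_add_left)
    also have "\<dots> = a *\<^sub>R (\<Sum>i<n. s1 i *\<^sub>R v i) + (1-a) *\<^sub>R (\<Sum>i<n. s2 i *\<^sub>R v i)"
      by (simp add: sum.distrib scaleR_sum_right)
    finally have "f (\<Sum>i<n. s i *\<^sub>R v i) \<le> a * f (\<Sum>i<n. s1 i *\<^sub>R v i) + (1-a) * f (\<Sum>i<n. s2 i *\<^sub>R v i)"
      using sub[of "a *\<^sub>R (\<Sum>i<n. s1 i *\<^sub>R v i)" "(1-a) *\<^sub>R (\<Sum>i<n. s2 i *\<^sub>R v i)"]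
        hom[of a] hom[of "1-a"] a by simp
    also have "\<dots> \<le> a * M + (1-a) * M"
      using h1 h2 a by (intro add_mono mult_left_mono) auto
    finally show ?thesis by (simp add: algebra_simps)
  qed
  have main: "\<And>s. card (fr s) = F \<Longrightarrow> (\<forall>i<n. 0 \<le> s i \<and> s i \<le> 1) \<Longrightarrow> (\<Sum>i<n. s i) \<le> real K
     \<Longrightarrow> f (\<Sum>i<n. s i *\<^sub>R v i) \<le> M" for F
  proof (induction F rule: less_induct)
    case (less F s)
    show ?case
    proof (cases "fr s = {}")
      case True
      define I where "I = {i. i<n \<and> s i = 1}"
      have s01: "\<forall>i<n. s i = 0 \<or> s i = 1" using True less.prems(2) unfolding fr_def by force
      have "(\<Sum>i<n. s i *\<^sub>R v i) = (\<Sum>i<n. if i \<in> I then v i else 0)"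
        using s01 by (intro sum.cong) (auto simp: I_def)
      also have "\<dots> = (\<Sum>i\<in>I. v i)"
        by (simp add: sum.If_cases I_def Collect_conj_eq lessThan_def Int_commute Int_left_commute)
      finally have e1: "(\<Sum>i<n. s i *\<^sub>R v i) = (\<Sum>i\<in>I. v i)" .
      have "(\<Sum>i<n. s i) = (\<Sum>i<n. if i \<in> I then 1 else 0)"
        using s01 by (intro sum.cong) (auto simp: I_def)
      also have "\<dots> = real (card I)"
        by (simp add: sum.If_cases I_def Collect_conj_eq lessThan_def Int_commute Int_left_commute)
      finally have "card I \<le> K" using less.prems(3) by simp
      moreover have "I \<subseteq> {..<n}" by (auto simp: I_def)
      ultimately show ?thesis using M e1 by simp
    next
      case False
      then obtain i where i: "i \<in> fr s" by auto
      show ?thesis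
      proof (cases "\<exists>j. j \<in> fr s \<and> j \<noteq> i")
        case False
        hence only: "fr s = {i}" using i by blast
        define s1 where "s1 = s(i := 1)"
        define s2 where "s2 = s(i := 0)"
        have in1: "i < n" "0 < s i" "s i < 1" using i by (auto simp: fr_def)
        have others: "\<forall>k<n. k \<noteq> i \<longrightarrow> s k = 0 \<or> s k = 1"
        proof (intro allI impI)
          fix k assume k: "k < n" "k \<noteq> i"
          hence "k \<notin> fr s" using only by blast
          thus "s k = 0 \<or> s k = 1" using k less.prems(2) unfolding fr_def by force
        qed
        have fr1: "fr s1 = {}" "fr s2 = {}"
          using others unfolding fr_def s1_def s2_def by auto
        define m where "m = card {k. k<n \<and> k \<noteq> i \<and> s k = 1}"
        have sumrem: "(\<Sum>k<n. g k) = g i + (\<Sum>k\<in>{..<n}-{i}. g k)" for g :: "nat \<Rightarrow> real"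
          using in1(1) by (simp add: sum.remove)
        have "(\<Sum>k\<in>{..<n}-{i}. s k) = (\<Sum>k\<in>{..<n}-{i}. if s k = 1 then 1 else 0)"
          using others by (intro sum.cong) auto
        also have "\<dots> = real (card (({..<n}-{i}) \<inter> {k. s k = 1}))"
          by (simp add: sum.If_cases)
        also have "({..<n}-{i}) \<inter> {k. s k = 1} = {k. k<n \<and> k \<noteq> i \<and> s k = 1}" by auto
        also have "real (card \<dots>) = real m" by (simp add: m_def)
        finally have sm: "(\<Sum>k\<in>{..<n}-{i}. s k) = real m" .
        have "real m + s i \<le> K" using less.prems(3) sumrem[of s] sm by simp
        hence "m < K" using in1 by linarith
        hence mK: "real m + 1 \<le> K" by linarith
        have "(\<Sum>k\<in>{..<n}-{i}. s1 k) = (\<Sum>k\<in>{..<n}-{i}. s k)"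
          by (intro sum.cong) (auto simp: s1_def)
        hence S1: "(\<Sum>k<n. s1 k) \<le> K" using sumrem[of s1] sm mK by (simp add: s1_def)
        have "(\<Sum>k\<in>{..<n}-{i}. s2 k) = (\<Sum>k\<in>{..<n}-{i}. s k)"
          by (intro sum.cong) (auto simp: s2_def)
        hence S2: "(\<Sum>k<n. s2 k) \<le> K" using sumrem[of s2] sm mK by (simp add: s2_def)
        have Fpos: "F = 1" using less.prems(1) only by simp
        have b1: "\<forall>k<n. 0 \<le> s1 k \<and> s1 k \<le> 1" "\<forall>k<n. 0 \<le> s2 k \<and> s2 k \<le> 1"
          using less.prems(2) by (auto simp: s1_def s2_def)
        have h1: "f (\<Sum>k<n. s1 k *\<^sub>R v k) \<le> M"
          using less.IH[of 0 s1] fr1 Fpos b1 S1 by simp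
        have h2: "f (\<Sum>k<n. s2 k *\<^sub>R v k) \<le> M"
          using less.IH[of 0 s2] fr1 Fpos b1 S2 by simp
        show ?thesis
          by (rule conv[of "s i" s s1 s2]) (use in1 h1 h2 in \<open>auto simp: s1_def s2_def algebra_simps\<close>)
      next
        case True
        then obtain j where j: "j \<in> fr s" "j \<noteq> i" by auto
        have ii: "i < n" "0 < s i" "s i < 1" using i by (auto simp: fr_def)
        have jj: "j < n" "0 < s j" "s j < 1" using j by (auto simp: fr_def)
        define lp where "lp = min (1 - s i) (s j)"
        define lm where "lm = min (s i) (1 - s j)"
        have lpos: "lp > 0" "lm > 0" using ii jj by (auto simp: lp_def lm_def)
        define s1 where "s1 = (\<lambda>k. s k + (if k = i then lp else 0) - (if k = j then lp else 0))"
        define s2 where "s2 = (\<lambda>k. s k - (if k = i then lm else 0) + (if k = j then lm else 0))"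
        have sum1: "(\<Sum>k<n. s1 k) = (\<Sum>k<n. s k)"
          using ii jj by (simp add: s1_def sum.distrib sum_subtractf)
        have sum2: "(\<Sum>k<n. s2 k) = (\<Sum>k<n. s k)"
          using ii jj by (simp add: s2_def sum.distrib sum_subtractf)
        have b1: "\<forall>k<n. 0 \<le> s1 k \<and> s1 k \<le> 1" "\<forall>k<n. 0 \<le> s2 k \<and> s2 k \<le> 1"
          using less.prems(2) j ii jj by (auto simp: s1_def s2_def lp_def lm_def)
        have "fr s1 \<subset> fr s"
        proof -
          have "fr s1 \<subseteq> fr s" using ii jj lpos by (auto simp: fr_def s1_def)
          moreover have "i \<notin> fr s1 \<or> j \<notin> fr s1" using ii jj j by (auto simp: fr_def s1_def lp_def min_def)
          ultimately show ?thesis using i j by auto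
        qed
        hence c1: "card (fr s1) < F" using less.prems(1) finfr by (metis psubset_card_mono)
        have "fr s2 \<subset> fr s"
        proof -
          have "fr s2 \<subseteq> fr s" using ii jj lpos by (auto simp: fr_def s2_def)
          moreover have "i \<notin> fr s2 \<or> j \<notin> fr s2" using ii jj j by (auto simp: fr_def s2_def lm_def min_def)
          ultimately show ?thesis using i j by auto
        qed
        hence c2: "card (fr s2) < F" using less.prems(1) finfr by (metis psubset_card_mono)
        have h1: "f (\<Sum>k<n. s1 k *\<^sub>R v k) \<le> M"
          using less.IH[OF c1 refl] b1 sum1 less.prems(3) by simp
        have h2: "f (\<Sum>k<n. s2 k *\<^sub>R v k) \<le> M"
          using less.IH[OF c2 refl] b1 sum2 less.prems(3) by simp
        have a: "0 \<le> lm / (lp + lm)" "lm / (lp + lm) \<le> 1" using lpos by auto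
        have eq: "\<forall>k<n. s k = lm / (lp + lm) * s1 k + (1 - lm / (lp + lm)) * s2 k"
        proof (intro allI impI)
          fix k
          have "1 - lm / (lp + lm) = lp / (lp + lm)" using lpos by (simp add: field_simps)
          moreover have "lm / (lp + lm) * s1 k + lp / (lp + lm) * s2 k = s k"
          proof -
            have key: "lm * s1 k + lp * s2 k = (lp+lm) * s k"
              using j unfolding s1_def s2_def by (cases "k=i"; cases "k=j") (simp_all add: algebra_simps)
            have "lm / (lp + lm) * s1 k + lp / (lp + lm) * s2 k = (lm * s1 k + lp * s2 k) / (lp + lm)"
              by (simp add: add_divide_distrib)
            also have "\<dots> = s k" using key lpos by simp
            finally show ?thesis .
          qed
          ultimately show "s k = lm / (lp + lm) * s1 k + (1 - lm / (lp + lm)) * s2 k" by simp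
        qed
        show ?thesis by (rule conv[OF a eq h1 h2])
      qed
    qed
  qed
  show "(\<forall>i<n. 0 \<le> s i \<and> s i \<le> 1) \<Longrightarrow> (\<Sum>i<n. s i) \<le> real K
     \<Longrightarrow> f (\<Sum>i<n. s i *\<^sub>R v i) \<le> M"
    using main by blast
qed

lemma mv_scaleR: "(c *\<^sub>R A) *v x = c *\<^sub>R (A *v x)" for A :: "complex^'d^'d"
  by (simp add: vec_eq_iff matrix_vector_mult_def scaleR_sum_right mult_scaleR_left)

lemma opnorm_add: "opnorm (A + B) \<le> opnorm A + opnorm B" for A B :: "complex^'d^'d"
  unfolding opnorm_def matrix_vector_mult_add_rdistrib
  by (rule onorm_triangle) auto

lemma opnorm_scale: "0 \<le> c \<Longrightarrow> opnorm (c *\<^sub>R A) = c * opnorm A" for A :: "complex^'d^'d"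
  unfolding opnorm_def mv_scaleR
  by (subst onorm_scaleR) auto

theorem lemma6p1:
  fixes n :: nat and t :: "nat \<Rightarrow> real" and D :: "nat \<Rightarrow> complex^'d^'d"
    and T1 Tinf :: real
  assumes t_nonneg: "\<forall>i<n. 0 \<le> t i"
    and D_psd: "\<forall>i<n. psd (D i)"
    and T1: "(\<Sum>i<n. \<bar>t i\<bar>) \<le> T1"
    and Tinf_pos: "0 < Tinf"
    and Tinf: "\<forall>i<n. \<bar>t i\<bar> \<le> Tinf"
  shows "opnorm (\<Sum>i<n. t i *\<^sub>R D i) \<le>
    Tinf * Sup {opnorm (\<Sum>i\<in>I. D i) | I. I \<subseteq> {..<n} \<and> real (card I) \<le> of_int \<lceil>T1 / Tinf\<rceil>}"
proof -
  define S where "S = {opnorm (\<Sum>i\<in>I. D i) | I. I \<subseteq> {..<n} \<and> real (card I) \<le> of_int \<lceil>T1 / Tinf\<rceil>}"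
  define K where "K = nat \<lceil>T1 / Tinf\<rceil>"
  have T1pos: "0 \<le> T1" proof -
    have "0 \<le> (\<Sum>i<n. \<bar>t i\<bar>)" by (rule sum_nonneg) simp
    thus ?thesis using T1 by linarith
  qed
  hence "0 \<le> T1 / Tinf" using Tinf_pos by simp
  hence cpos: "0 \<le> \<lceil>T1 / Tinf\<rceil>" by linarith
  have realK: "real K = of_int \<lceil>T1 / Tinf\<rceil>" using cpos by (simp add: K_def)
  have "S \<subseteq> (\<lambda>I. opnorm (\<Sum>i\<in>I. D i)) ` Pow {..<n}" by (auto simp: S_def)
  hence finS: "finite S" by (rule finite_subset) auto
  have M: "opnorm (\<Sum>i\<in>I. D i) \<le> Sup S" if "I \<subseteq> {..<n}" "card I \<le> K" for I
  proof (rule cSup_upper)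
    show "opnorm (\<Sum>i\<in>I. D i) \<in> S" unfolding S_def using that realK
      by (auto simp flip: of_nat_le_iff[where 'a=real])
    show "bdd_above S" using finS by simp
  qed
  define s where "s i = t i / Tinf" for i
  have sb: "\<forall>i<n. 0 \<le> s i \<and> s i \<le> 1"
    using t_nonneg Tinf Tinf_pos by (auto simp: s_def)
  have "(\<Sum>i<n. s i) = (\<Sum>i<n. \<bar>t i\<bar>) / Tinf"
    using t_nonneg by (simp add: s_def sum_divide_distrib)
  also have "\<dots> \<le> T1 / Tinf" using T1 Tinf_pos by (simp add: divide_right_mono)
  also have "\<dots> \<le> real K" using realK by linarith
  finally have ssum: "(\<Sum>i<n. s i) \<le> real K" .
  have bound: "opnorm (\<Sum>i<n. s i *\<^sub>R D i) \<le> Sup S"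
    by (rule conv_bound[where f=opnorm and v=D and K=K and n=n, OF opnorm_add opnorm_scale M sb ssum]) auto
  have "(\<Sum>i<n. t i *\<^sub>R D i) = Tinf *\<^sub>R (\<Sum>i<n. s i *\<^sub>R D i)"
    using Tinf_pos by (simp add: scaleR_sum_right s_def)
  hence "opnorm (\<Sum>i<n. t i *\<^sub>R D i) = Tinf * opnorm (\<Sum>i<n. s i *\<^sub>R D i)"
    using Tinf_pos by (simp add: opnorm_scale)
  also have "\<dots> \<le> Tinf * Sup S" using bound Tinf_pos by simp
  finally show ?thesis unfolding S_def .
qed

end
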